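(* Let $\mathcal{M}$ be a circular embedding of a connected graph $X$ with $\ell$ edges on a closed orientable surface of genus $g$. Let $M$, $N$ be its arc-face and arc-tail incidence matrices and $U$ its vertex-face transition matrix. Then the $1$-eigenspace of $U$ is \[(\operatorname{col}(M)\cap\operatorname{col}(N))\oplus(\ker(M^T)\cap\ker(N^T)),\] and it has dimension $\ell+2g$. Moreover, $\operatorname{col}(M)\cap\operatorname{col}(N)=\operatorname{span}\{\mathbf{1}\}$, where $\mathbf{1}$ is the all-ones vector.
   Context: Setting. A circular embedding is a cellular embedding in which every face is bounded by a cycle. Arcs are ordered pairs $(u,v)$ with $\{u,v\}$ an edge, and $u$ is the tail; there are $2\ell$ arcs. Consistent orientation. Fix an orientation of all face boundaries such that each edge shared by two faces receives opposite directions in them. Then every arc lies in exactly one facial walk. Matrices. $M$ is the $2\ell\times s$ arc-face incidence matrix ($M_{(a,b),f}=1$ iff $(a,b)$ lies in the facial walk of $f$). $N$ is the $2\ell\times n$ arc-tail incidence matrix ($N_{(a,b),u}=1$ iff $a=u$). $\widehat M,\widehat N$ are these matrices with each column scaled to unit length. The vertex-face transition matrix is $U=(2\widehat M\widehat M^T-I)(2\widehat N\widehat N^T-I)$. *)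

theory Defs
  imports "HOL-Analysis.Analysis"
begin

text \<open>Arcs form a finite type 'a with reversal rv (the arc (u,v) is
sent to (v,u)) and tail map tail into the finite vertex type 'v.\<close>

definition simple_arc_graph :: "('a \<Rightarrow> 'a) \<Rightarrow> ('a \<Rightarrow> 'v) \<Rightarrow> bool" where
  "simple_arc_graph rv tail \<longleftrightarrow>
     (\<forall>a. rv (rv a) = a) \<and> (\<forall>a. tail (rv a) \<noteq> tail a) \<and>
     (\<forall>a b. tail a = tail b \<and> tail (rv a) = tail (rv b) \<longrightarrow> a = b)"

definition arc_graph_connected :: "('a \<Rightarrow> 'a) \<Rightarrow> ('a \<Rightarrow> 'v) \<Rightarrow> bool" where
  "arc_graph_connected rv tail \<longleftrightarrow>
     (\<forall>u v. (\<lambda>x y. \<exists>a. tail a = x \<and> tail (rv a) = y)\<^sup>*\<^sup>* u v)"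

definition rotation_system :: "('a \<Rightarrow> 'v) \<Rightarrow> ('a \<Rightarrow> 'a) \<Rightarrow> bool" where
  "rotation_system tail rho \<longleftrightarrow> bij rho \<and> (\<forall>a. tail (rho a) = tail a) \<and>
     (\<forall>a b. tail a = tail b \<longrightarrow> (\<exists>k. (rho ^^ k) a = b))"

text \<open>Face permutation: after arc (u,v) the facial walk continues with rho (v,u).\<close>
definition face_perm :: "('a \<Rightarrow> 'a) \<Rightarrow> ('a \<Rightarrow> 'a) \<Rightarrow> 'a \<Rightarrow> 'a" where
  "face_perm rv rho = rho \<circ> rv"

definition face_labelling :: "('a \<Rightarrow> 'a) \<Rightarrow> ('a \<Rightarrow> 'f) \<Rightarrow> bool" where
  "face_labelling phi fc \<longleftrightarrow> surj fc \<and> (\<forall>a b. fc a = fc b \<longleftrightarrow> (\<exists>k. (phi ^^ k) a = b))"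

text \<open>Circular: each facial walk is a cycle (distinct vertices, length at least 3).\<close>
definition circular_faces :: "('a \<Rightarrow> 'v) \<Rightarrow> ('a \<Rightarrow> 'f) \<Rightarrow> bool" where
  "circular_faces tail fc \<longleftrightarrow> (\<forall>a b. fc a = fc b \<and> tail a = tail b \<longrightarrow> a = b) \<and>
     (\<forall>f. 3 \<le> card {a. fc a = f})"

definition arc_face_matrix :: "('a::finite \<Rightarrow> 'f::finite) \<Rightarrow> real^'f^'a" where
  "arc_face_matrix fc = (\<chi> a f. if fc a = f then 1 else 0)"

definition arc_tail_matrix :: "('a::finite \<Rightarrow> 'v::finite) \<Rightarrow> real^'v^'a" where
  "arc_tail_matrix tail = (\<chi> a u. if tail a = u then 1 else 0)"

definition normalize_cols :: "real^'n^'m \<Rightarrow> real^'n^'m" where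
  "normalize_cols A = (\<chi> i j. A$i$j / norm (column j A))"

definition vf_transition_matrix :: "real^'f^'a \<Rightarrow> real^'v^'a \<Rightarrow> real^'a^'a" where
  "vf_transition_matrix M N =
     (let Mh = normalize_cols M; Nh = normalize_cols N in
      ((2::real) *\<^sub>R (Mh ** transpose Mh) - mat 1) ** ((2::real) *\<^sub>R (Nh ** transpose Nh) - mat 1))"

definition internal_direct_sum :: "'a::real_vector set \<Rightarrow> 'a set \<Rightarrow> 'a set \<Rightarrow> bool" where
  "internal_direct_sum E P Q \<longleftrightarrow> E = {x + y | x y. x \<in> P \<and> y \<in> Q} \<and> P \<inter> Q = {0}"

end

theory Submission
  imports Defs
begin


definition ind_mat :: "('a::finite \<Rightarrow> 'k::finite) \<Rightarrow> real^'k^'a" where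
  "ind_mat h = (\<chi> a j. if h a = j then 1 else 0)"

lemma scaleR_mat_vec: "((c::real) *\<^sub>R (A::real^'n^'m)) *v x = c *\<^sub>R (A *v x)"
  unfolding vec_eq_iff matrix_vector_mult_def by (auto simp: sum_distrib_left mult.assoc)

lemma tmat_entry: "(transpose A ** (B::real^'k^'a)) $ j $ k = column j A \<bullet> column k B"
  by (simp add: matrix_matrix_mult_def transpose_def column_def inner_vec_def)

lemma colnorm2: "(norm (column j (ind_mat h)))^2 = real (card {a. h a = j})"
proof -
  have "(norm (column j (ind_mat h)))^2 = (\<Sum>a\<in>UNIV. if h a = j then 1 else 0)"
    unfolding power2_norm_eq_inner by (auto simp: inner_vec_def column_def ind_mat_def intro!: sum.cong)
  also have "\<dots> = real (card {a. h a = j})"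
    by (simp add: sum.If_cases)
  finally show ?thesis .
qed

lemma colnorm_pos: assumes "surj h" shows "norm (column j (ind_mat h)) > 0"
proof -
  obtain a where "h a = j" using assms by (metis surjD)
  then have "card {a. h a = j} > 0" by (auto simp: card_gt_0_iff)
  then have "(norm (column j (ind_mat h)))^2 > 0" by (simp add: colnorm2)
  then show ?thesis by (metis norm_ge_zero order_less_le power_zero_numeral zero_power2 less_le)
qed

lemma QtQ: assumes "surj h"
  shows "transpose (normalize_cols (ind_mat h)) ** normalize_cols (ind_mat h) = mat 1"
proof -
  let ?n = "\<lambda>j. norm (column j (ind_mat h))"
  have e: "normalize_cols (ind_mat h) $ a $ j = (if h a = j then 1 / ?n j else 0)" for a j
    by (simp add: normalize_cols_def ind_mat_def)
  show ?thesis
  proof (simp add: vec_eq_iff, intro allI)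
    fix j k
    have "(transpose (normalize_cols (ind_mat h)) ** normalize_cols (ind_mat h)) $ j $ k
       = (\<Sum>a\<in>UNIV. if h a = j \<and> h a = k then 1 / (?n j * ?n k) else 0)"
      by (auto simp: matrix_matrix_mult_def transpose_def e intro!: sum.cong)
    also have "\<dots> = (if j = k then 1 else 0)"
    proof (cases "j = k")
      case True
      have "(\<Sum>a\<in>UNIV. if h a = j \<and> h a = k then 1 / (?n j * ?n k) else 0)
           = real (card {a. h a = j}) * (1 / (?n j)^2)"
        using True by (simp add: sum.If_cases power2_eq_square)
      also have "\<dots> = 1" using colnorm_pos[OF assms, of j] by (simp add: colnorm2[symmetric])
      finally show ?thesis using True by simp
    qed (auto intro!: sum.neutral)
    finally show "(transpose (normalize_cols (ind_mat h)) ** normalize_cols (ind_mat h)) $ j $ k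
       = mat 1 $ j $ k" by (simp add: mat_def)
  qed
qed

lemma proj_idem: "transpose Q ** (Q::real^'k^'a) = mat 1 \<Longrightarrow>
   (Q ** transpose Q) *v ((Q ** transpose Q) *v x) = (Q ** transpose Q) *v x"
  by (metis matrix_mul_assoc matrix_mul_rid matrix_vector_mul_assoc)

lemma proj_fix: assumes "transpose Q ** (Q::real^'k^'a) = mat 1"
  shows "{x. (Q ** transpose Q) *v x = x} = span (columns Q)"
proof
  show "{x. (Q ** transpose Q) *v x = x} \<subseteq> span (columns Q)"
    by (auto, metis matrix_vector_mul_assoc matrix_vector_mult_in_columnspace)
  have sub: "subspace {x. (Q ** transpose Q) *v x = x}"
  proof -
    have "{x. (Q ** transpose Q) *v x = x} = {x. (Q ** transpose Q - mat 1) *v x = 0}"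
      by (auto simp: matrix_vector_mult_diff_rdistrib)
    moreover have "subspace {x. (Q ** transpose Q - mat 1) *v x = 0}"
      using linear_subspace_kernel[OF matrix_vector_mul_linear[of "Q ** transpose Q - mat 1"]] by simp
    ultimately show ?thesis by simp
  qed
  have "columns Q \<subseteq> {x. (Q ** transpose Q) *v x = x}"
  proof
    fix c assume "c \<in> columns Q"
    then obtain j where "c = column j Q" by (auto simp: columns_def)
    then have "c = Q *v axis j 1" by (simp add: matrix_vector_mult_basis)
    then show "c \<in> {x. (Q ** transpose Q) *v x = x}"
      using assms by (simp add: matrix_vector_mul_assoc) (metis matrix_mul_assoc matrix_mul_rid)
  qed
  then show "span (columns Q) \<subseteq> {x. (Q ** transpose Q) *v x = x}"
    using sub by (rule span_minimal)
qed

lemma proj_ker: assumes "transpose Q ** (Q::real^'k^'a) = mat 1"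
  shows "{x. (Q ** transpose Q) *v x = 0} = {x. transpose Q *v x = 0}"
proof (intro set_eqI iffI, simp_all only: mem_Collect_eq)
  fix x assume "(Q ** transpose Q) *v x = 0"
  then have "transpose Q *v ((Q ** transpose Q) *v x) = 0" by simp
  then show "transpose Q *v x = 0" using assms
    by (metis matrix_mul_assoc matrix_mul_lid matrix_vector_mul_assoc)
next
  fix x assume "transpose Q *v x = 0"
  then show "(Q ** transpose Q) *v x = 0"
    by (metis matrix_vector_mul_assoc matrix_vector_mult_0_right)
qed

lemma cols_dim: assumes "transpose Q ** (Q::real^'k^'a) = mat 1"
  shows "dim (span (columns Q)) = CARD('k)"
proof -
  have dot: "column j Q \<bullet> column k Q = (if j = k then 1 else 0)" for j k
    using tmat_entry[of Q Q j k] assms by (simp add: mat_def)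
  have inj: "inj (\<lambda>j. column j Q)"
    by (rule injI) (metis dot zero_neq_one)
  have ceq: "columns Q = range (\<lambda>j. column j Q)" by (auto simp: columns_def)
  have "pairwise orthogonal (columns Q)"
    by (auto simp: pairwise_def orthogonal_def ceq dot)
  moreover have "0 \<notin> columns Q"
    using dot by (auto simp: ceq) (metis inner_zero_left zero_neq_one)
  ultimately have ind: "independent (columns Q)" by (rule pairwise_orthogonal_independent)
  have "card (columns Q) = CARD('k)" by (simp add: ceq card_image inj)
  then show ?thesis using ind by (simp add: dim_span dim_eq_card_independent)
qed

lemma col_norm_rel: "column j (normalize_cols (ind_mat h)) =
   (1 / norm (column j (ind_mat h))) *\<^sub>R column j (ind_mat h)"
  by (simp add: vec_eq_iff normalize_cols_def column_def)

lemma span_norm: assumes "surj h"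
  shows "span (columns (normalize_cols (ind_mat h))) = span (columns (ind_mat h))"
proof -
  have n: "norm (column j (ind_mat h)) \<noteq> 0" for j using colnorm_pos[OF assms, of j] by simp
  have "column j (ind_mat h) \<in> span (columns (ind_mat h))" for j
    by (rule span_base) (auto simp: columns_def)
  then have 1: "columns (normalize_cols (ind_mat h)) \<subseteq> span (columns (ind_mat h))"
    by (auto simp: columns_def col_norm_rel intro!: span_mul)
  have "column j (ind_mat h) = norm (column j (ind_mat h)) *\<^sub>R column j (normalize_cols (ind_mat h))" for j
    using n[of j] by (simp add: col_norm_rel)
  moreover have "column j (normalize_cols (ind_mat h)) \<in> span (columns (normalize_cols (ind_mat h)))" for j
    by (rule span_base) (auto simp: columns_def)
  ultimately have 2: "columns (ind_mat h) \<subseteq> span (columns (normalize_cols (ind_mat h)))"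
    unfolding columns_def by (smt (verit) mem_Collect_eq span_mul subsetI)
  show ?thesis by (meson 1 2 span_minimal subspace_span subset_antisym)
qed

lemma ker_norm: assumes "surj h"
  shows "(transpose (normalize_cols (ind_mat h)) *v x = 0) = (transpose (ind_mat h) *v x = 0)"
proof -
  have n: "norm (column j (ind_mat h)) \<noteq> 0" for j using colnorm_pos[OF assms, of j] by simp
  have e: "(transpose (normalize_cols (ind_mat h)) *v x) $ j = (transpose (ind_mat h) *v x) $ j / norm (column j (ind_mat h))" for j
    by (simp add: matrix_vector_mult_def transpose_def normalize_cols_def sum_divide_distrib)
  show ?thesis unfolding vec_eq_iff zero_index e using n by simp
qed

lemma col_const: assumes "x \<in> span (columns (ind_mat h))" "h a = h b" shows "x$a = x$b"
proof (rule span_induct_alt[OF assms(1), where h="\<lambda>x. x$a = x$b"])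
  fix c and x y :: "real^'a" assume "x \<in> columns (ind_mat h)" "y$a = y$b"
  then show "(c *\<^sub>R x + y)$a = (c *\<^sub>R x + y)$b" using assms(2)
    by (auto simp: columns_def column_def ind_mat_def)
qed simp

lemma one_in: "vec 1 \<in> span (columns (ind_mat h))"
proof -
  have "vec 1 = (\<Sum>j\<in>UNIV. column j (ind_mat h))"
    by (simp add: vec_eq_iff sum_component column_def ind_mat_def)
  also have "\<dots> \<in> span (columns (ind_mat h))"
    by (rule span_sum) (auto intro: span_base simp: columns_def)
  finally show ?thesis .
qed

lemma refl_prod: fixes A B :: "real^'n^'n"
  assumes iA: "\<And>x. A *v (A *v x) = A *v x" and iB: "\<And>x. B *v (B *v x) = B *v x"
  shows "((2 *\<^sub>R A - mat 1) ** (2 *\<^sub>R B - mat 1)) *v x = x \<longleftrightarrow> A *v x = B *v x"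
proof -
  let ?y = "2 *\<^sub>R (B *v x) - x"
  have U: "((2 *\<^sub>R A - mat 1) ** (2 *\<^sub>R B - mat 1)) *v x = 2 *\<^sub>R (A *v ?y) - ?y"
    by (simp add: matrix_vector_mul_assoc[symmetric] matrix_vector_mult_diff_rdistrib scaleR_mat_vec)
  have Ay: "A *v ?y = 2 *\<^sub>R (A *v (B *v x)) - A *v x"
    by (simp add: matrix_vector_mult_diff_distrib matrix_vector_mult_scaleR)
  show ?thesis
  proof
    assume "((2 *\<^sub>R A - mat 1) ** (2 *\<^sub>R B - mat 1)) *v x = x"
    then have e: "2 *\<^sub>R (A *v ?y) - ?y = x" using U by simp
    then have "A *v (2 *\<^sub>R (A *v ?y) - ?y) = A *v x" by simp
    moreover have gen: "A *v (2 *\<^sub>R (A *v z) - z) = A *v z" for z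
    proof -
      have "A *v (2 *\<^sub>R (A *v z) - z) = 2 *\<^sub>R (A *v z) - A *v z"
        using iA by (simp add: matrix_vector_mult_diff_distrib matrix_vector_mult_scaleR)
      also have "\<dots> = A *v z" by (metis add_diff_cancel scaleR_2)
      finally show ?thesis .
    qed
    ultimately have "A *v ?y = A *v x" by metis
    with e have "2 *\<^sub>R (A *v x) - (2 *\<^sub>R (B *v x) - x) = x" by simp
    then have "(2::real) *\<^sub>R (A *v x - B *v x) = 0" by (simp add: algebra_simps)
    then show "A *v x = B *v x" by simp
  next
    assume h: "A *v x = B *v x"
    have "A *v (B *v x) = A *v x" using h iA by metis
    then have "A *v ?y = 2 *\<^sub>R (A *v x) - A *v x" using Ay by simp
    then have "A *v ?y = A *v x" by (metis add_diff_cancel scaleR_2)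
    then show "((2 *\<^sub>R A - mat 1) ** (2 *\<^sub>R B - mat 1)) *v x = x" using U h by (simp add: algebra_simps)
  qed
qed


lemma conn_const:
  assumes "(\<lambda>x y. \<exists>a. tail a = x \<and> tail (rv a) = y)\<^sup>*\<^sup>* u v"
    and t: "\<And>a b. tail a = tail b \<Longrightarrow> (x::real^'a) $ a = x $ b"
    and r: "\<And>a. x $ (rv a) = x $ a"
  shows "\<forall>a b. tail a = u \<longrightarrow> tail b = v \<longrightarrow> x $ a = x $ b"
  using assms(1)
proof (induction rule: rtranclp_induct)
  case base
  then show ?case using t by metis
next
  case (step y z)
  then obtain c where c: "tail c = y" "tail (rv c) = z" by blast
  show ?case
  proof (intro allI impI)
    fix a b assume "tail a = u" "tail b = z"
    then have "x $ a = x $ c" using step.IH c by blast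
    also have "\<dots> = x $ rv c" using r by simp
    also have "\<dots> = x $ b" using t c \<open>tail b = z\<close> by metis
    finally show "x $ a = x $ b" .
  qed
qed

lemma sub_ker: "subspace {x. (A::real^'n^'m) *v x = 0}"
  using linear_subspace_kernel[OF matrix_vector_mul_linear[of A]] by simp

lemma tvec_entry: "(transpose (A::real^'n^'m) *v y) $ j = column j A \<bullet> y"
  by (simp add: matrix_vector_mult_def transpose_def column_def inner_vec_def mult.commute)

lemma ker_orth: "(transpose (A::real^'n^'m) *v y = 0) \<longleftrightarrow> (\<forall>c\<in>columns A. orthogonal c y)"
proof -
  have "(transpose A *v y = 0) \<longleftrightarrow> (\<forall>j. (transpose A *v y)$j = 0)" by (simp only: vec_eq_iff zero_index)
  also have "\<dots> \<longleftrightarrow> (\<forall>j. column j A \<bullet> y = 0)" by (simp only: tvec_entry)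
  also have "\<dots> \<longleftrightarrow> (\<forall>c\<in>columns A. orthogonal c y)" by (auto simp: columns_def orthogonal_def)
  finally show ?thesis .
qed

theorem theorem3p1:
  fixes rv :: "'a::finite \<Rightarrow> 'a" and tail :: "'a \<Rightarrow> 'v::finite"
    and rho :: "'a \<Rightarrow> 'a" and fc :: "'a \<Rightarrow> 'f::finite" and l g :: nat
  assumes "simple_arc_graph rv tail"
    and "arc_graph_connected rv tail"
    and "rotation_system tail rho"
    and "face_labelling (face_perm rv rho) fc"
    and "circular_faces tail fc"
    and "CARD('a) = 2 * l"
    and "int CARD('v) - int l + int CARD('f) = 2 - 2 * int g"
  defines "M \<equiv> arc_face_matrix fc" and "N \<equiv> arc_tail_matrix tail"
    and "U \<equiv> vf_transition_matrix (arc_face_matrix fc) (arc_tail_matrix tail)"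
  shows "internal_direct_sum {x. U *v x = x}
            (span (columns M) \<inter> span (columns N))
            ({x. transpose M *v x = 0} \<inter> {x. transpose N *v x = 0})
       \<and> dim {x. U *v x = x} = l + 2 * g
       \<and> span (columns M) \<inter> span (columns N) = span {vec 1}"
proof -
  have surjf: "surj fc" using assms(4) by (simp add: face_labelling_def)
  have surjt: "surj tail"
  proof -
    { fix v
      obtain a0 :: 'a where True by simp
      have d: "tail (rv a0) \<noteq> tail a0" using assms(1) by (simp add: simple_arc_graph_def)
      have "v \<in> range tail"
      proof (cases "v = tail a0")
        case True then show ?thesis by simp
      next
        case False
        have "(\<lambda>x y. \<exists>a. tail a = x \<and> tail (rv a) = y)\<^sup>*\<^sup>* (tail a0) v"
          using assms(2) by (simp add: arc_graph_connected_def)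
        then show ?thesis using False
          by (cases rule: rtranclp.cases) auto
      qed }
    then show ?thesis by auto
  qed
  have Mi: "M = ind_mat fc" by (simp add: M_def arc_face_matrix_def ind_mat_def)
  have Ni: "N = ind_mat tail" by (simp add: N_def arc_tail_matrix_def ind_mat_def)
  define Q1 where "Q1 = normalize_cols M"
  define Q2 where "Q2 = normalize_cols N"
  define P1 where "P1 = Q1 ** transpose Q1"
  define P2 where "P2 = Q2 ** transpose Q2"
  have o1: "transpose Q1 ** Q1 = mat 1" unfolding Q1_def Mi by (rule QtQ[OF surjf])
  have o2: "transpose Q2 ** Q2 = mat 1" unfolding Q2_def Ni by (rule QtQ[OF surjt])
  have i1: "\<And>x. P1 *v (P1 *v x) = P1 *v x" unfolding P1_def by (rule proj_idem[OF o1])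
  have i2: "\<And>x. P2 *v (P2 *v x) = P2 *v x" unfolding P2_def by (rule proj_idem[OF o2])
  have Ueq: "U = (2 *\<^sub>R P1 - mat 1) ** (2 *\<^sub>R P2 - mat 1)"
    by (simp add: U_def vf_transition_matrix_def Let_def P1_def P2_def Q1_def Q2_def M_def N_def)
  have E: "{x. U *v x = x} = {x. P1 *v x = P2 *v x}"
    unfolding Ueq using refl_prod[OF i1 i2] by blast
  have f1: "span (columns M) = {x. P1 *v x = x}"
    unfolding P1_def using proj_fix[OF o1] span_norm[OF surjf] by (simp add: Q1_def Mi)
  have f2: "span (columns N) = {x. P2 *v x = x}"
    unfolding P2_def using proj_fix[OF o2] span_norm[OF surjt] by (simp add: Q2_def Ni)
  have k1: "{x. transpose M *v x = 0} = {x. P1 *v x = 0}"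
    unfolding P1_def using proj_ker[OF o1] ker_norm[OF surjf] by (simp add: Q1_def Mi)
  have k2: "{x. transpose N *v x = 0} = {x. P2 *v x = 0}"
    unfolding P2_def using proj_ker[OF o2] ker_norm[OF surjt] by (simp add: Q2_def Ni)
  define PP where "PP = span (columns M) \<inter> span (columns N)"
  define QQ where "QQ = {x. transpose M *v x = 0} \<inter> {x. transpose N *v x = 0}"
  have PPe: "PP = {x. P1 *v x = x \<and> P2 *v x = x}" by (auto simp: PP_def f1 f2)
  have QQe: "QQ = {x. P1 *v x = 0 \<and> P2 *v x = 0}" unfolding QQ_def k1 k2 by auto
  have dsum: "{x. U *v x = x} = {x + y | x y. x \<in> PP \<and> y \<in> QQ}"
  proof (rule set_eqI, rule iffI)
    fix x assume "x \<in> {x. U *v x = x}"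
    then have h: "P1 *v x = P2 *v x" using E by blast
    have "P1 *v x \<in> PP" using h i1 i2 by (simp add: PPe) metis
    moreover have "x - P1 *v x \<in> QQ" using h i1 i2
      by (simp add: QQe matrix_vector_mult_diff_distrib) metis
    ultimately show "x \<in> {x + y | x y. x \<in> PP \<and> y \<in> QQ}" by force
  next
    fix x assume "x \<in> {x + y | x y. x \<in> PP \<and> y \<in> QQ}"
    then obtain y z where "x = y + z" "y \<in> PP" "z \<in> QQ" by blast
    then have "P1 *v x = P2 *v x" by (simp add: PPe QQe matrix_vector_right_distrib)
    then show "x \<in> {x. U *v x = x}" using E by blast
  qed
  have int0: "PP \<inter> QQ = {0}" by (auto simp: PPe QQe) 
  have ids: "internal_direct_sum {x. U *v x = x} PP QQ"
    using dsum int0 by (simp add: internal_direct_sum_def)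
  have rvc: "fc (rho (rv a)) = fc a" for a
  proof -
    have "(face_perm rv rho ^^ 1) a = rho (rv a)" by (simp add: face_perm_def)
    then show ?thesis using assms(4) unfolding face_labelling_def by metis
  qed
  have trho: "tail (rho a) = tail a" for a using assms(3) by (simp add: rotation_system_def)
  have PPone: "PP = span {vec 1}"
  proof
    have "vec 1 \<in> PP" using one_in[of fc] one_in[of tail] by (simp add: PP_def Mi Ni)
    moreover have "subspace PP" by (simp add: PP_def subspace_inter)
    ultimately show "span {vec 1} \<subseteq> PP" using span_minimal[of "{vec 1}" PP] by blast
  next
    show "PP \<subseteq> span {vec 1}"
    proof
      fix x assume x: "x \<in> PP"
      have xN: "x \<in> span (columns (ind_mat tail))" using x by (simp add: PP_def Ni)
      have xM: "x \<in> span (columns (ind_mat fc))" using x by (simp add: PP_def Mi)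
      have t: "\<And>a b. tail a = tail b \<Longrightarrow> x $ a = x $ b"
        using col_const[OF xN] by blast
      have f: "\<And>a b. fc a = fc b \<Longrightarrow> x $ a = x $ b"
        using col_const[OF xM] by blast
      have r: "\<And>a. x $ (rv a) = x $ a"
        using t[OF trho[symmetric]] f[OF rvc] by metis
      obtain a0 :: 'a where True by simp
      have all: "x $ a = x $ a0" for a
        using conn_const[where tail=tail and rv=rv and u="tail a" and v="tail a0" and x=x, OF _ t r] assms(2)
        by (simp add: arc_graph_connected_def)
      have "x = (x $ a0) *\<^sub>R vec 1" using all by (simp add: vec_eq_iff)
      then show "x \<in> span {vec 1}" by (metis span_base span_mul singletonI)
    qed
  qed
  have v1: "vec 1 \<noteq> (0::real^'a)" by (simp add: vec_eq_iff)
  have dPP: "dim PP = 1" using v1 by (simp add: PPone dim_singleton)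
  have subPP: "subspace PP" by (simp add: PP_def subspace_inter)
  have subQQ: "subspace QQ" unfolding QQ_def by (intro subspace_inter sub_ker)
  have dE: "dim {x. U *v x = x} = dim PP + dim QQ"
    using dim_sums_Int[OF subPP subQQ] int0 dsum by (simp add: dim_singleton)
  define S where "S = columns M \<union> columns N"
  have QQo: "QQ = {y \<in> UNIV. \<forall>x \<in> span S. orthogonal x y}"
  proof -
    have "y \<in> QQ \<longleftrightarrow> (\<forall>c \<in> S. orthogonal c y)" for y
      unfolding QQ_def S_def mem_Collect_eq Int_iff ker_orth by blast
    moreover have "(\<forall>c \<in> S. orthogonal c y) \<longleftrightarrow> (\<forall>c \<in> span S. orthogonal c y)" for y
      by (meson orthogonal_commute orthogonal_to_span span_base)
    ultimately show ?thesis by blast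
  qed
  have dQQ: "dim QQ + dim (span S) = CARD('a)"
    using dim_subspace_orthogonal_to_vectors[of "span S" UNIV] QQo by simp
  have dM: "dim (span (columns M)) = CARD('f)"
    using cols_dim[OF o1] span_norm[OF surjf] by (simp add: Q1_def Mi)
  have dN: "dim (span (columns N)) = CARD('v)"
    using cols_dim[OF o2] span_norm[OF surjt] by (simp add: Q2_def Ni)
  have dS: "dim (span S) + 1 = CARD('f) + CARD('v)"
    using dim_sums_Int[OF subspace_span subspace_span, of "columns M" "columns N"] dM dN dPP
    by (simp add: S_def span_Un PP_def)
  have "dim {x. U *v x = x} = l + 2 * g"
    using dE dPP dQQ dS assms(6) assms(7) by linarith
  then show ?thesis using ids PPone by (simp add: PP_def QQ_def)
qed

end
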